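(* Let $A$ be an irreducible $\{0,1\}$-matrix which is not a permutation matrix, and let $\mathcal{C}$ be a right Markov code for $(X_A,\sigma_A)$. Then the matrix $A(\mathcal{C})$ is irreducible and is not a permutation matrix.
   Context: For an $N\times N$ matrix $A$ with entries in $\{0,1\}$, $\Sigma_A=\{1,\dots,N\}$, $X_A$ is the set of sequences $(x_n)_{n\in\mathbb{N}}$ in $\Sigma_A$ with $A(x_n,x_{n+1})=1$ for all $n$, with shift $\sigma_A$. $B_k(X_A)$ is the set of admissible words of length $k$, $B_*(X_A)$ the union over $k\ge0$ (including the empty word). For a word $w=w_1\cdots w_\ell$, $\sigma_A(w)=w_2\cdots w_\ell$. A code is a nonempty $\mathcal{C}\subset B_*(X_A)$ such that any equality of concatenations $\omega(i_1)\cdots\omega(i_k)=\omega(j_1)\cdots\omega(j_n)$ of words of $\mathcal{C}$ forces $n=k$ and $\omega(i_m)=\omega(j_m)$ for all $m$; a prefix code is a code in which no word is a prefix of another. A finite prefix code $\mathcal{C}=\{\omega(1),\dots,\omega(M)\}\subset B_*(X_A)$, $\Sigma_{A(\mathcal{C})}=\{1,\dots,M\}$, is a right Markov code for $(X_A,\sigma_A)$ if: (i) for every $\gamma\in B_*(X_A)$ there is $\eta\in B_*(X_A)$ with $\gamma\eta\in B_*(X_A)$ and a unique finite sequence $(i_1,\dots,i_k)$ in $\Sigma_{A(\mathcal{C})}$ with $\gamma\eta=\omega(i_1)\cdots\omega(i_k)$; (ii) there is $L\in\mathbb{N}$ such that for all $i_1,\dots,i_L$ with $\omega(i_1)\cdots\omega(i_L)\in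 B_*(X_A)$ there exist $j_1,\dots,j_k\in\Sigma_{A(\mathcal{C})}$ with $\sigma_A(\omega(i_1))\omega(i_2)\cdots\omega(i_L)=\omega(j_1)\cdots\omega(j_k)$; (iii) for every $i,j$ there are $n_1,\dots,n_l$ with $\omega(i)\omega(n_1)\cdots\omega(n_l)\omega(j)\in B_*(X_A)$. $A(\mathcal{C})$ is the $M\times M$ $\{0,1\}$-matrix with $A(\mathcal{C})(i,j)=A(r(\omega(i)),s(\omega(j)))$, where $s(\omega(i))$, $r(\omega(i))$ are the first and last symbols of $\omega(i)$; equivalently $A(\mathcal{C})(i,j)=1$ iff $\omega(i)\omega(j)\in B_*(X_A)$. *)

theory Defs
  imports Main "HOL-Library.Sublist"
begin

text \<open>Matrices are indexed by symbols 1..N, represented as functions nat => nat => nat.\<close>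

definition zero_one_matrix :: "nat \<Rightarrow> (nat \<Rightarrow> nat \<Rightarrow> nat) \<Rightarrow> bool" where
  "zero_one_matrix N A \<longleftrightarrow> (\<forall>i\<in>{1..N}. \<forall>j\<in>{1..N}. A i j \<in> {0,1})"

fun mat_pow :: "nat \<Rightarrow> (nat \<Rightarrow> nat \<Rightarrow> nat) \<Rightarrow> nat \<Rightarrow> nat \<Rightarrow> nat \<Rightarrow> nat" where
  "mat_pow N A 0 i j = (if i = j then 1 else 0)"
| "mat_pow N A (Suc n) i j = (\<Sum>k\<in>{1..N}. mat_pow N A n i k * A k j)"

definition irreducible_mat :: "nat \<Rightarrow> (nat \<Rightarrow> nat \<Rightarrow> nat) \<Rightarrow> bool" where
  "irreducible_mat N A \<longleftrightarrow>
     (\<forall>i\<in>{1..N}. \<forall>j\<in>{1..N}. \<exists>n\<ge>1. mat_pow N A n i j > 0)"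

definition permutation_mat :: "nat \<Rightarrow> (nat \<Rightarrow> nat \<Rightarrow> nat) \<Rightarrow> bool" where
  "permutation_mat N A \<longleftrightarrow> zero_one_matrix N A \<and>
     (\<forall>i\<in>{1..N}. card {j\<in>{1..N}. A i j = 1} = 1) \<and>
     (\<forall>j\<in>{1..N}. card {i\<in>{1..N}. A i j = 1} = 1)"

definition X_A :: "nat \<Rightarrow> (nat \<Rightarrow> nat \<Rightarrow> nat) \<Rightarrow> (nat \<Rightarrow> nat) set" where
  "X_A N A = {x. (\<forall>n. x n \<in> {1..N}) \<and> (\<forall>n. A (x n) (x (Suc n)) = 1)}"

definition B_star :: "nat \<Rightarrow> (nat \<Rightarrow> nat \<Rightarrow> nat) \<Rightarrow> nat list set" where
  "B_star N A = {w. \<exists>x\<in>X_A N A. \<exists>m. w = map x [m..<m + length w]}"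

definition is_code :: "nat list set \<Rightarrow> bool" where
  "is_code C \<longleftrightarrow> C \<noteq> {} \<and>
     (\<forall>us vs. set us \<subseteq> C \<longrightarrow> set vs \<subseteq> C \<longrightarrow> concat us = concat vs \<longrightarrow> us = vs)"

definition is_prefix_code :: "nat list set \<Rightarrow> bool" where
  "is_prefix_code C \<longleftrightarrow> is_code C \<and> (\<forall>u\<in>C. \<forall>v\<in>C. u \<noteq> v \<longrightarrow> \<not> prefix u v)"

text \<open>A right Markov code given as an enumeration omega(1),...,omega(M) of a finite prefix code.\<close>
definition right_markov_code ::
  "nat \<Rightarrow> (nat \<Rightarrow> nat \<Rightarrow> nat) \<Rightarrow> nat \<Rightarrow> (nat \<Rightarrow> nat list) \<Rightarrow> bool" where
  "right_markov_code N A M \<omega> \<longleftrightarrow>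
     M \<ge> 1 \<and> inj_on \<omega> {1..M} \<and> \<omega> ` {1..M} \<subseteq> B_star N A \<and>
     is_prefix_code (\<omega> ` {1..M}) \<and>
     (\<forall>\<gamma>\<in>B_star N A. \<exists>\<eta>\<in>B_star N A. \<gamma> @ \<eta> \<in> B_star N A \<and>
        (\<exists>!is. set is \<subseteq> {1..M} \<and> \<gamma> @ \<eta> = concat (map \<omega> is))) \<and>
     (\<exists>L::nat. L \<ge> 1 \<and> (\<forall>is. length is = L \<longrightarrow> set is \<subseteq> {1..M} \<longrightarrow>
        concat (map \<omega> is) \<in> B_star N A \<longrightarrow>
        (\<exists>js. set js \<subseteq> {1..M} \<and>
           tl (\<omega> (hd is)) @ concat (map \<omega> (tl is)) = concat (map \<omega> js)))) \<and>
     (\<forall>i\<in>{1..M}. \<forall>j\<in>{1..M}. \<exists>ns. set ns \<subseteq> {1..M} \<and>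
        \<omega> i @ concat (map \<omega> ns) @ \<omega> j \<in> B_star N A)"

text \<open>The matrix A(C): A(C)(i,j) = A(r(omega i), s(omega j)).\<close>
definition code_matrix :: "(nat \<Rightarrow> nat \<Rightarrow> nat) \<Rightarrow> (nat \<Rightarrow> nat list) \<Rightarrow> nat \<Rightarrow> nat \<Rightarrow> nat" where
  "code_matrix A \<omega> i j = A (last (\<omega> i)) (hd (\<omega> j))"

end

theory Submission
  imports Defs
begin


abbreviation adj :: "(nat \<Rightarrow> nat \<Rightarrow> nat) \<Rightarrow> nat \<Rightarrow> nat \<Rightarrow> bool" where
  "adj A a b \<equiv> A a b = 1"

lemma adm_of_B:
  assumes "w \<in> B_star N A"
  shows "set w \<subseteq> {1..N} \<and> successively (adj A) w"
proof -
  obtain x m where x: "x \<in> X_A N A" and w: "w = map x [m..<m+length w]"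
    using assms unfolding B_star_def by blast
  have "\<forall>m. set (map x [m..<m+n]) \<subseteq> {1..N} \<and> successively (adj A) (map x [m..<m+n])" for n
  proof (induction n)
    case 0 then show ?case by simp
  next
    case (Suc n)
    show ?case
    proof
      fix m
      have e: "[m..<m+Suc n] = m # [Suc m..<Suc m + n]" by (simp add: upt_rec)
      have h: "set (map x [Suc m..<Suc m+n]) \<subseteq> {1..N} \<and> successively (adj A) (map x [Suc m..<Suc m+n])"
        using Suc by blast
      have "x m \<in> {1..N}" "A (x m) (x (Suc m)) = 1" using x unfolding X_A_def by auto
      then show "set (map x [m..<m+Suc n]) \<subseteq> {1..N} \<and> successively (adj A) (map x [m..<m+Suc n])"
        using h unfolding e by (cases n) (auto simp: successively_Cons hd_map hd_upt simp del: upt_Suc)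
    qed
  qed
  then have h: "set (map x [m..<m+length w]) \<subseteq> {1..N} \<and> successively (adj A) (map x [m..<m+length w])" by blast
  show ?thesis using h by (simp only: w[symmetric])
qed

lemma B_of_adm:
  assumes succ: "\<forall>v\<in>{1..N}. \<exists>v'\<in>{1..N}. A v v' = 1"
  shows "w \<noteq> [] \<Longrightarrow> set w \<subseteq> {1..N} \<Longrightarrow> successively (adj A) w \<Longrightarrow> \<exists>x\<in>X_A N A. w = map x [0..<length w]"
proof (induction w)
  case Nil then show ?case by simp
next
  case (Cons a w)
  show ?case
  proof (cases "w = []")
    case True
    obtain s where s: "\<forall>v\<in>{1..N}. s v \<in> {1..N} \<and> A v (s v) = 1" using succ by metis
    define x where "x n = (s^^n) a" for n
    have xin: "x n \<in> {1..N}" for n by (induction n) (use Cons.prems s in \<open>auto simp: x_def\<close>)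
    have "x \<in> X_A N A" unfolding X_A_def using xin s by (auto simp: x_def)
    moreover have "a # w = map x [0..<length (a#w)]" using True by (simp add: x_def)
    ultimately show ?thesis apply - apply (rule bexI) apply assumption+ done
  next
    case False
    have "set w \<subseteq> {1..N}" "successively (adj A) w" using Cons.prems by (auto simp: successively_Cons)
    then obtain x where x: "x \<in> X_A N A" "w = map x [0..<length w]"
      using Cons.IH False by blast
    have aw: "A a (hd w) = 1" "a \<in> {1..N}" using Cons.prems False by (auto simp: successively_Cons)
    define y where "y n = (case n of 0 \<Rightarrow> a | Suc k \<Rightarrow> x k)" for n
    have "hd (map x [0..<length w]) = x 0" using False
      by (cases "length w") (simp_all add: map_upt_Suc del: upt_Suc)
    with x(2) have hx: "hd w = x 0" by metis
    have x1: "x n \<in> {1..N}" "A (x n) (x (Suc n)) = 1" for n using x(1) unfolding X_A_def by auto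
    have "y n \<in> {1..N}" for n using x1 aw by (cases n) (auto simp: y_def)
    moreover have "A (y n) (y (Suc n)) = 1" for n using x1 aw hx by (cases n) (auto simp: y_def)
    ultimately have "y \<in> X_A N A" unfolding X_A_def by auto
    moreover have "a # w = map y [0..<length (a#w)]"
      by (subst x(2)) (simp add: map_upt_Suc y_def del: upt_Suc)
    ultimately show ?thesis apply - apply (rule bexI) apply assumption+ done
  qed
qed


lemma mat_pow_step:
  assumes "mat_pow M B n i k > 0" "k \<in> {1..M}" "B k j > 0"
  shows "mat_pow M B (Suc n) i j > 0"
proof -
  have "mat_pow M B n i k * B k j \<le> (\<Sum>k\<in>{1..M}. mat_pow M B n i k * B k j)"
    by (rule member_le_sum) (use assms in auto)
  moreover have "mat_pow M B n i k * B k j > 0" using assms by simp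
  ultimately have "(\<Sum>k\<in>{1..M}. mat_pow M B n i k * B k j) > 0" by linarith
  then show ?thesis by simp
qed

lemma mat_pow_path:
  assumes "i \<in> {1..M}"
  shows "set ws \<subseteq> {1..M} \<Longrightarrow> successively (adj B) (i # ws) \<Longrightarrow> mat_pow M B (length ws) i (last (i # ws)) > 0"
proof (induction ws rule: rev_induct)
  case Nil then show ?case by simp
next
  case (snoc j ws)
  have s: "successively (adj B) (i # ws)" "B (last (i # ws)) j = 1"
    using snoc.prems(2) successively_append_iff[of "adj B" "i # ws" "[j]"] by auto
  have l: "last (i # ws) \<in> {1..M}" using snoc.prems(1) assms by (cases ws rule: rev_exhaust) auto
  have sw: "set ws \<subseteq> {1..M}" using snoc.prems(1) by simp
  have "mat_pow M B (Suc (length ws)) i j > 0"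
    by (rule mat_pow_step[OF snoc.IH[OF sw s(1)] l]) (use s(2) in simp)
  then show ?case by simp
qed

lemma mat_pow_pos_path:
  "mat_pow N A n i j > 0 \<Longrightarrow> j \<in> {1..N} \<Longrightarrow> \<exists>ws. length ws = n \<and> set ws \<subseteq> {1..N} \<and> successively (\<lambda>a b. A a b > 0) (i # ws) \<and> last (i # ws) = j"
proof (induction n arbitrary: j)
  case 0 then show ?case by (simp split: if_splits)
next
  case (Suc n)
  have sp: "(\<Sum>k\<in>{1..N}. mat_pow N A n i k * A k j) > 0" using Suc.prems by simp
  have "\<exists>k\<in>{1..N}. mat_pow N A n i k * A k j > 0"
  proof (rule ccontr)
    assume "\<not> ?thesis"
    then have "\<forall>k\<in>{1..N}. mat_pow N A n i k * A k j = 0" by auto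
    then have z: "(\<Sum>k\<in>{1..N}. mat_pow N A n i k * A k j) = 0" by (rule sum.neutral)
    show False using sp unfolding z by simp
  qed
  then obtain k where k: "k \<in> {1..N}" "mat_pow N A n i k * A k j > 0" by blast
  then obtain ws where ws: "length ws = n" "set ws \<subseteq> {1..N}" "successively (\<lambda>a b. A a b > 0) (i # ws)" "last (i # ws) = k"
    using Suc.IH[of k] by auto
  have "successively (\<lambda>a b. A a b > 0) ((i # ws) @ [j])"
    unfolding successively_append_iff using ws k by auto
  then show ?case using ws Suc.prems(2) by (intro exI[of _ "ws @ [j]"]) auto
qed

lemma row_nonempty:
  assumes "irreducible_mat N A" "i \<in> {1..N}"
  shows "\<exists>k\<in>{1..N}. A i k > 0"
proof -
  obtain n where n: "n \<ge> 1" "mat_pow N A n i i > 0" using assms unfolding irreducible_mat_def by blast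
  then obtain ws where ws: "length ws = n" "set ws \<subseteq> {1..N}" "successively (\<lambda>a b. A a b > 0) (i # ws)"
    using mat_pow_pos_path[of N A n i i] assms(2) by blast
  then obtain k ws' where "ws = k # ws'" using n by (cases ws) auto
  then show ?thesis using ws by auto
qed


lemma code_nonempty: "is_code C \<Longrightarrow> [] \<notin> C"
proof
  assume c: "is_code C" and e: "[] \<in> C"
  have "set [[]] \<subseteq> C" "set ([]::nat list list) \<subseteq> C" "concat [[]] = concat ([]::nat list list)" using e by auto
  then have "[[]] = ([]::nat list list)" using c unfolding is_code_def by blast
  then show False by simp
qed

lemma concat_path:
  "(\<forall>i\<in>set is. \<omega> i \<noteq> []) \<Longrightarrow> successively (adj A) (concat (map \<omega> is)) \<Longrightarrow>
   successively (\<lambda>i j. code_matrix A \<omega> i j = 1) is"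
proof (induction "is")
  case Nil then show ?case by simp
next
  case (Cons i "is")
  have s: "successively (adj A) (\<omega> i @ concat (map \<omega> is))" using Cons.prems(2) by simp
  have s2: "successively (adj A) (concat (map \<omega> is))" using s successively_append_iff by blast
  have IH: "successively (\<lambda>i j. code_matrix A \<omega> i j = 1) is" using Cons.IH Cons.prems(1) s2 by simp
  show ?case
  proof (cases "is")
    case Nil then show ?thesis by simp
  next
    case (Cons j js)
    have nj: "\<omega> j \<noteq> []" "\<omega> i \<noteq> []" using Cons.prems(1) Cons by auto
    then have "hd (concat (map \<omega> is)) = hd (\<omega> j)" "concat (map \<omega> is) \<noteq> []" using Cons by auto
    then have "A (last (\<omega> i)) (hd (\<omega> j)) = 1" using s nj successively_append_iff by metis
    then show ?thesis using IH Cons by (simp add: code_matrix_def)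
  qed
qed

lemma functional_prefix:
  assumes func: "\<forall>a\<in>S. \<forall>b\<in>S. \<forall>c\<in>S. R a b \<longrightarrow> R a c \<longrightarrow> b = c"
  shows "successively R xs \<Longrightarrow> successively R ys \<Longrightarrow> set xs \<subseteq> S \<Longrightarrow> set ys \<subseteq> S \<Longrightarrow>
    xs \<noteq> [] \<Longrightarrow> ys \<noteq> [] \<Longrightarrow> hd xs = hd ys \<Longrightarrow> prefix xs ys \<or> prefix ys xs"
proof (induction xs arbitrary: ys)
  case Nil then show ?case by simp
next
  case (Cons a xs)
  obtain ys' where ys: "ys = a # ys'" using Cons.prems by (cases ys) auto
  show ?case
  proof (cases "xs = [] \<or> ys' = []")
    case True then show ?thesis using ys by auto
  next
    case False
    have r: "R a (hd xs)" "R a (hd ys')" using Cons.prems False ys by (auto simp: successively_Cons)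
    have "hd xs \<in> S" "hd ys' \<in> S" "a \<in> S" using Cons.prems False ys by auto
    then have "hd xs = hd ys'" using func r by blast
    moreover have "successively R xs" "successively R ys'" using Cons.prems ys by (auto simp: successively_Cons)
    ultimately have "prefix xs ys' \<or> prefix ys' xs" using Cons.IH[of ys'] Cons.prems False ys by auto
    then show ?thesis using ys by auto
  qed
qed

lemma prefix_concat: "prefix xs ys \<Longrightarrow> prefix (concat (map f xs)) (concat (map f ys))"
  by (auto simp: prefix_def)

primrec rep :: "nat \<Rightarrow> nat list \<Rightarrow> nat \<Rightarrow> nat list" where
  "rep a ws 0 = [a]"
| "rep a ws (Suc k) = rep a ws k @ ws"

lemma rep_props:
  assumes "ws \<noteq> []" "last ws = a" "successively R (a # ws)" "set (a # ws) \<subseteq> S"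
  shows "rep a ws k \<noteq> [] \<and> last (rep a ws k) = a \<and> successively R (rep a ws k) \<and> set (rep a ws k) \<subseteq> S"
proof (induction k)
  case 0 then show ?case using assms by simp
next
  case (Suc k)
  have "R a (hd ws)" "successively R ws" using assms by (auto simp: successively_Cons)
  then show ?case using Suc assms by (auto simp: successively_append_iff)
qed

lemma rep_prefix: "k < l \<Longrightarrow> \<exists>t. rep a ws l = rep a ws k @ ws @ t"
proof (induction l)
  case 0 then show ?case by simp
next
  case (Suc l)
  show ?case
  proof (cases "k = l")
    case True then show ?thesis by simp
  next
    case False
    then obtain t where "rep a ws l = rep a ws k @ ws @ t" using Suc by auto
    then show ?thesis by simp
  qed
qed


lemma col_nonempty:
  assumes "mat_pow N A (Suc n) i j > 0"
  shows "\<exists>k\<in>{1..N}. A k j > 0"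
proof (rule ccontr)
  assume "\<not> ?thesis"
  then have "\<forall>k\<in>{1..N}. mat_pow N A n i k * A k j = 0" by auto
  then have z: "(\<Sum>k\<in>{1..N}. mat_pow N A n i k * A k j) = 0" by (rule sum.neutral)
  show False using assms unfolding mat_pow.simps z by simp
qed

lemma branching:
  assumes zo: "zero_one_matrix N A" and irr: "irreducible_mat N A" and np: "\<not> permutation_mat N A"
  shows "\<exists>a\<in>{1..N}. \<exists>b\<in>{1..N}. \<exists>c\<in>{1..N}. b \<noteq> c \<and> A a b = 1 \<and> A a c = 1"
proof (rule ccontr)
  assume nb: "\<not> ?thesis"
  have pos1: "A i j > 0 \<longleftrightarrow> A i j = 1" if "i \<in> {1..N}" "j \<in> {1..N}" for i j
  proof -
    have "A i j \<in> {0,1}" using zo that unfolding zero_one_matrix_def by blast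
    then show ?thesis by auto
  qed
  have "\<exists>k. k \<in> {1..N} \<and> A i k = 1" if hi: "i \<in> {1..N}" for i
  proof -
    obtain k where "k \<in> {1..N}" "A i k > 0" using row_nonempty[OF irr hi] by blast
    then show ?thesis using pos1[OF hi] by blast
  qed
  then have "\<forall>i\<in>{1..N}. \<exists>k. k \<in> {1..N} \<and> A i k = 1" by blast
  then obtain f where f: "\<forall>i\<in>{1..N}. f i \<in> {1..N} \<and> A i (f i) = 1" by (rule bchoice[THEN exE])
  have funiq: "A i j = 1 \<longleftrightarrow> j = f i" if "i \<in> {1..N}" "j \<in> {1..N}" for i j
  proof
    assume "A i j = 1"
    moreover have "f i \<in> {1..N}" "A i (f i) = 1" using f that by auto
    ultimately show "j = f i" using nb that by (meson atLeastAtMost_iff)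
  next
    assume "j = f i" then show "A i j = 1" using f that by auto
  qed
  have row: "{j\<in>{1..N}. A i j = 1} = {f i}" if "i \<in> {1..N}" for i
  proof -
    have "f i \<in> {1..N}" using f that by auto
    then show ?thesis using funiq[OF that] by auto
  qed
  have colne: "\<exists>k\<in>{1..N}. f k = j" if hj: "j \<in> {1..N}" for j
  proof -
    obtain n where n: "n \<ge> 1" "mat_pow N A n j j > 0" using irr hj unfolding irreducible_mat_def by blast
    then obtain n' where "n = Suc n'" by (cases n) auto
    then obtain k where k: "k \<in> {1..N}" "A k j > 0" using col_nonempty n by blast
    then have "A k j = 1" using pos1 hj by blast
    then show ?thesis using funiq[OF k(1) hj] k(1) by blast
  qed
  have "f ` {1..N} = {1..N}"
  proof
    show "f ` {1..N} \<subseteq> {1..N}" using f by auto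
    show "{1..N} \<subseteq> f ` {1..N}" using colne by blast
  qed
  then have inj: "inj_on f {1..N}" by (simp add: eq_card_imp_inj_on)
  have col: "{i\<in>{1..N}. A i j = 1} = {k}" if "j \<in> {1..N}" "k \<in> {1..N}" "f k = j" for j k
  proof
    show "{k} \<subseteq> {i\<in>{1..N}. A i j = 1}" using funiq[OF that(2) that(1)] that by simp
    show "{i\<in>{1..N}. A i j = 1} \<subseteq> {k}"
    proof
      fix i assume i: "i \<in> {i\<in>{1..N}. A i j = 1}"
      then have hi: "i \<in> {1..N}" "A i j = 1" by auto
      then have "f i = j" using funiq[OF hi(1) that(1)] by simp
      then have "i = k" using inj that hi(1) unfolding inj_on_def by metis
      then show "i \<in> {k}" by simp
    qed
  qed
  have "permutation_mat N A"
    unfolding permutation_mat_def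
  proof (intro conjI ballI)
    show "zero_one_matrix N A" by (rule zo)
  next
    fix i assume "i \<in> {1..N}" then show "card {j\<in>{1..N}. A i j = 1} = 1" using row by simp
  next
    fix j assume j: "j \<in> {1..N}"
    then obtain k where "k \<in> {1..N}" "f k = j" using colne by blast
    then show "card {i\<in>{1..N}. A i j = 1} = 1" using col j by simp
  qed
  then show False using np by simp
qed

lemma succ_mono:
  "successively P xs \<Longrightarrow> set xs \<subseteq> S \<Longrightarrow> (\<forall>x\<in>S. \<forall>y\<in>S. P x y \<longrightarrow> Q x y) \<Longrightarrow> successively Q xs"
  by (induction P xs rule: successively.induct) auto

theorem mainTheorem6:
  fixes N M :: nat and A :: "nat \<Rightarrow> nat \<Rightarrow> nat" and \<omega> :: "nat \<Rightarrow> nat list"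
  assumes "zero_one_matrix N A"
    and "irreducible_mat N A"
    and "\<not> permutation_mat N A"
    and "right_markov_code N A M \<omega>"
  shows "irreducible_mat M (code_matrix A \<omega>) \<and> \<not> permutation_mat M (code_matrix A \<omega>)"
proof -
  note zo = assms(1) and irr = assms(2) and np = assms(3)
  let ?B = "code_matrix A \<omega>"
  have M1: "M \<ge> 1" and inB: "\<omega> ` {1..M} \<subseteq> B_star N A" and pc: "is_prefix_code (\<omega> ` {1..M})"
    and ci: "\<forall>\<gamma>\<in>B_star N A. \<exists>\<eta>\<in>B_star N A. \<gamma> @ \<eta> \<in> B_star N A \<and>
        (\<exists>!is. set is \<subseteq> {1..M} \<and> \<gamma> @ \<eta> = concat (map \<omega> is))"
    and ciii: "\<forall>i\<in>{1..M}. \<forall>j\<in>{1..M}. \<exists>ns. set ns \<subseteq> {1..M} \<and>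
        \<omega> i @ concat (map \<omega> ns) @ \<omega> j \<in> B_star N A"
    using assms(4) unfolding right_markov_code_def by blast+
  have ne: "\<forall>i\<in>{1..M}. \<omega> i \<noteq> []"
    using code_nonempty[of "\<omega> ` {1..M}"] pc unfolding is_prefix_code_def by force
  have pos1: "A i j > 0 \<longleftrightarrow> A i j = 1" if "i \<in> {1..N}" "j \<in> {1..N}" for i j
    using zo that unfolding zero_one_matrix_def by fastforce
  have succ: "\<forall>v\<in>{1..N}. \<exists>v'\<in>{1..N}. A v v' = 1"
    using row_nonempty[OF irr] pos1 by blast
  have Bpath: "successively (\<lambda>i j. ?B i j = 1) is"
    if "set is \<subseteq> {1..M}" "concat (map \<omega> is) \<in> B_star N A" for "is"
    using concat_path[of "is" \<omega> A] that ne adm_of_B[OF that(2)] by blast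
  have part1: "irreducible_mat M ?B"
    unfolding irreducible_mat_def
  proof (intro ballI)
    fix i j assume i: "i \<in> {1..M}" and j: "j \<in> {1..M}"
    then obtain ns where ns: "set ns \<subseteq> {1..M}" "\<omega> i @ concat (map \<omega> ns) @ \<omega> j \<in> B_star N A"
      using ciii by blast
    have "concat (map \<omega> (i # ns @ [j])) = \<omega> i @ concat (map \<omega> ns) @ \<omega> j" by simp
    then have "successively (\<lambda>i j. ?B i j = 1) (i # ns @ [j])"
      using Bpath[of "i # ns @ [j]"] ns i j by simp
    then have "mat_pow M ?B (length (ns @ [j])) i (last (i # ns @ [j])) > 0"
      using mat_pow_path[OF i, of "ns @ [j]" ?B] ns j by simp
    then show "\<exists>n\<ge>1. mat_pow M ?B n i j > 0" by (intro exI[of _ "length (ns @ [j])"]) simp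
  qed
  have part2: "\<not> permutation_mat M ?B"
  proof
    assume pm: "permutation_mat M ?B"
    have func: "\<forall>a\<in>{1..M}. \<forall>b\<in>{1..M}. \<forall>c\<in>{1..M}. ?B a b = 1 \<longrightarrow> ?B a c = 1 \<longrightarrow> b = c"
    proof (intro ballI impI)
      fix a b c assume a: "a \<in> {1..M}" and b: "b \<in> {1..M}" and c: "c \<in> {1..M}"
        and ab: "?B a b = 1" and ac: "?B a c = 1"
      have "card {j\<in>{1..M}. ?B a j = 1} = 1" using pm a unfolding permutation_mat_def by blast
      then obtain x where e: "{j\<in>{1..M}. ?B a j = 1} = {x}" by (rule card_1_singletonE)
      have "b \<in> {j\<in>{1..M}. ?B a j = 1}" "c \<in> {j\<in>{1..M}. ?B a j = 1}" using b c ab ac by simp_all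
      then show "b = c" unfolding e by simp
    qed
    obtain a b c where abc: "a \<in> {1..N}" "b \<in> {1..N}" "c \<in> {1..N}" "b \<noteq> c" "A a b = 1" "A a c = 1"
      using branching[OF zo irr np] by blast
    obtain n where n: "n \<ge> 1" "mat_pow N A n a a > 0" using irr abc(1) unfolding irreducible_mat_def by blast
    then obtain ws where ws: "length ws = n" "set ws \<subseteq> {1..N}" "successively (\<lambda>x y. A x y > 0) (a # ws)"
      "last (a # ws) = a"
      using mat_pow_pos_path[of N A n a a] abc(1) by blast
    have wsne: "ws \<noteq> []" using ws n by auto
    have lw: "last ws = a" using ws wsne by simp
    have sa: "set (a # ws) \<subseteq> {1..N}" using ws abc by simp
    have sws: "successively (adj A) (a # ws)"
      using succ_mono[OF ws(3) sa, of "adj A"] pos1 by blast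
    define y where "y = (if b = hd ws then c else b)"
    have y: "y \<in> {1..N}" "A a y = 1" "y \<noteq> hd ws" using abc unfolding y_def by auto
    define \<gamma> where "\<gamma> k = rep a ws k @ [y]" for k
    have rp: "rep a ws k \<noteq> [] \<and> last (rep a ws k) = a \<and> successively (adj A) (rep a ws k) \<and> set (rep a ws k) \<subseteq> {1..N}" for k
      by (rule rep_props[OF wsne lw sws sa])
    have gB: "\<gamma> k \<in> B_star N A" for k
    proof -
      have "successively (adj A) (\<gamma> k)" unfolding \<gamma>_def using rp[of k] y
        by (simp add: successively_append_iff)
      moreover have "set (\<gamma> k) \<subseteq> {1..N}" "\<gamma> k \<noteq> []" unfolding \<gamma>_def using rp[of k] y by auto
      ultimately obtain x where xx: "x \<in> X_A N A" "\<gamma> k = map x [0..<length (\<gamma> k)]"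
        using B_of_adm[OF succ] by blast
      have "\<gamma> k = map x [0..<0 + length (\<gamma> k)]" unfolding add_0 by (rule xx(2))
      then show ?thesis unfolding B_star_def using xx(1) by blast
    qed
    have incomp: "\<not> prefix (\<gamma> k) (\<gamma> l) \<and> \<not> prefix (\<gamma> l) (\<gamma> k)" if kl: "k < l" for k l
    proof -
      obtain t where t: "rep a ws l = rep a ws k @ ws @ t" using rep_prefix[OF kl] by blast
      obtain w0 ws' where w0: "ws = w0 # ws'" using wsne by (cases ws) auto
      have gl: "\<gamma> l = rep a ws k @ (w0 # ws' @ t @ [y])" unfolding \<gamma>_def using t w0 by simp
      have "\<not> prefix (\<gamma> k) (\<gamma> l)" unfolding gl unfolding \<gamma>_def same_prefix_prefix using y(3) w0 by simp
      moreover have "length (\<gamma> k) < length (\<gamma> l)" unfolding \<gamma>_def t using wsne by simp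
      then have "\<not> prefix (\<gamma> l) (\<gamma> k)" using prefix_length_le by fastforce
      ultimately show ?thesis by blast
    qed
    have "\<forall>k. \<exists>is. set is \<subseteq> {1..M} \<and> prefix (\<gamma> k) (concat (map \<omega> is)) \<and> concat (map \<omega> is) \<in> B_star N A"
    proof
      fix k
      obtain \<eta> "is" where o: "\<gamma> k @ \<eta> \<in> B_star N A" "set is \<subseteq> {1..M}" "\<gamma> k @ \<eta> = concat (map \<omega> is)"
        using ci gB[of k] by blast
      have "prefix (\<gamma> k) (\<gamma> k @ \<eta>)" by simp
      then have "prefix (\<gamma> k) (concat (map \<omega> is))" unfolding o(3) .
      moreover have "concat (map \<omega> is) \<in> B_star N A" using o(1) unfolding o(3) .
      ultimately show "\<exists>is. set is \<subseteq> {1..M} \<and> prefix (\<gamma> k) (concat (map \<omega> is)) \<and> concat (map \<omega> is) \<in> B_star N A"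
        using o(2) by blast
    qed
    then obtain F where F: "\<And>k. set (F k) \<subseteq> {1..M}" "\<And>k. prefix (\<gamma> k) (concat (map \<omega> (F k)))"
      "\<And>k. concat (map \<omega> (F k)) \<in> B_star N A"
    proof -
      assume r: "\<And>F. \<lbrakk>\<And>k. set (F k) \<subseteq> {1..M}; \<And>k. prefix (\<gamma> k) (concat (map \<omega> (F k)));
        \<And>k. concat (map \<omega> (F k)) \<in> B_star N A\<rbrakk> \<Longrightarrow> thesis"
      from choice[OF \<open>\<forall>k. _\<close>] obtain F where
        "\<forall>k. set (F k) \<subseteq> {1..M} \<and> prefix (\<gamma> k) (concat (map \<omega> (F k))) \<and> concat (map \<omega> (F k)) \<in> B_star N A"
        by blast
      then show thesis by (intro r) blast+
    qed
    have Fne: "F k \<noteq> []" for k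
    proof
      assume "F k = []"
      then have "\<gamma> k = []" using F(2)[of k] by simp
      then show False unfolding \<gamma>_def by simp
    qed
    have Fs: "successively (\<lambda>i j. ?B i j = 1) (F k)" for k using Bpath F by blast
    have neq: "hd (F k) \<noteq> hd (F l)" if kl: "k < l" for k l
    proof
      assume h: "hd (F k) = hd (F l)"
      have "prefix (F k) (F l) \<or> prefix (F l) (F k)"
        using functional_prefix[OF func Fs[of k] Fs[of l] F(1)[of k] F(1)[of l] Fne[of k] Fne[of l] h] .
      then have "prefix (concat (map \<omega> (F k))) (concat (map \<omega> (F l))) \<or> prefix (concat (map \<omega> (F l))) (concat (map \<omega> (F k)))"
        using prefix_concat by blast
      then have "prefix (\<gamma> k) (\<gamma> l) \<or> prefix (\<gamma> l) (\<gamma> k)"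
      proof
        assume "prefix (concat (map \<omega> (F k))) (concat (map \<omega> (F l)))"
        then have "prefix (\<gamma> k) (concat (map \<omega> (F l)))" using F(2)[of k] prefix_order.trans by blast
        then show ?thesis using F(2)[of l] prefix_same_cases by blast
      next
        assume "prefix (concat (map \<omega> (F l))) (concat (map \<omega> (F k)))"
        then have "prefix (\<gamma> l) (concat (map \<omega> (F k)))" using F(2)[of l] prefix_order.trans by blast
        then show ?thesis using F(2)[of k] prefix_same_cases by blast
      qed
      then show False using incomp[OF kl] by blast
    qed
    have "inj_on (\<lambda>k. hd (F k)) {0..M}"
      unfolding inj_on_def
    proof (intro ballI impI)
      fix k l assume "k \<in> {0..M}" "l \<in> {0..M}" "hd (F k) = hd (F l)"
      then show "k = l" using neq[of k l] neq[of l k] by (cases k l rule: linorder_cases) auto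
    qed
    moreover have "(\<lambda>k. hd (F k)) ` {0..M} \<subseteq> {1..M}"
    proof
      fix z assume "z \<in> (\<lambda>k. hd (F k)) ` {0..M}"
      then obtain k where "z = hd (F k)" by blast
      then have "z \<in> set (F k)" using Fne[of k] by (simp add: hd_in_set)
      then show "z \<in> {1..M}" using F(1)[of k] by blast
    qed
    then have "card ((\<lambda>k. hd (F k)) ` {0..M}) \<le> card {1..M}" by (intro card_mono) auto
    then have "card ((\<lambda>k. hd (F k)) ` {0..M}) < card {0..M}" by simp
    ultimately show False using pigeonhole by blast
  qed
  show ?thesis using part1 part2 by blast
qed

end
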